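(* Let $\alpha>0$, $\kappa>1/2$, $\gamma<3/2$ and $\nu\in\mathbb R$. Then for every $C>1$ there exist $a,b\in\mathbb N$ and $\beta\in(0,1)$ such that for every $C_{\mathrm{start}}\ge1$ and every $C_z\in[0,\infty)$ the parameters $$\lambda_n=a^{(b^n)},\quad r_n=C_{\mathrm{start}}(C_z^2+1)\lambda_0^\beta\lambda_n^{-\beta}\ (n\ge0),\qquad \ell_n=\lambda_n^{-1},\quad \mu_n=\sqrt{\lambda_{n-1}\lambda_n}\ (n\ge1)$$ satisfy, for all $n\ge1$: (R1) $\mu_n\le\lambda_n$; (R2) $\ell_n\le1$; (R3) $\lambda_n\in\mathbb N$, $12\lambda_n\le4\mu_{n+1}$, $10\le\mu_n$, $48\lambda_n\le\lambda_{n+1}$; and $$C\big(\mathfrak E^{\mathrm{miss}}_n+\mathfrak E^{\mathrm{com}}_n+\mathfrak E^{\mathrm{time}}_n+\mathfrak E^{\mathrm{dis}}_n+\mathfrak E^{\mathrm{trans}}_n+\mathfrak E^{\mathrm{sto}}_n\big)\le r_n ,$$ where, with $\mathfrak S_{N,\theta}:=\sum_{k=1}^N4^{N-k}\ell_k^{-\theta}r_{k-1}^{1/2}$ (so $\mathfrak S_{0,\theta}=0$), $$\mathfrak E^{\mathrm{miss}}_n=\Big\{\log\mu_n\Big(\tfrac{\lambda_{n-1}}{\mu_n}+\tfrac{\mu_n}{\lambda_n}\Big)^2+\tfrac{\lambda_{n-1}}{\lambda_n}\Big\}r_{n-1},$$ $$\mathfrak E^{\mathrm{com}}_n=\log(\lambda_n)\lambda_{n-1}\ell_n^\alpha\mathfrak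 S_{n-1,\alpha}\mathfrak S_{n-1,0}+\log(\lambda_n)\lambda_{n-1}^{1/2}\big(\ell_n^\alpha\mathfrak S_{n-1,\alpha}+\lambda_{n-1}^{-\kappa}\mathfrak S_{n-1,0}\big)C_z+\log(\lambda_n)(\ell_n^\alpha+\lambda_{n-1}^{-\kappa})C_z^2,$$ $$\mathfrak E^{\mathrm{time}}_n=\log(\lambda_n)\lambda_n^{-3/2}r_{n-1}^{1/2}\ell_n^{-1},\qquad \mathfrak E^{\mathrm{dis}}_n=\log(\lambda_n)|\nu|\lambda_n^{\gamma-3/2}r_{n-1}^{1/4},$$ $$\mathfrak E^{\mathrm{trans}}_n=\log(\lambda_n)\lambda_{n-1}^{1/2}\lambda_n^{-1/2}r_{n-1}^{1/2}\mathfrak S_{n-1,0},\qquad \mathfrak E^{\mathrm{sto}}_n=\log(\lambda_n)\lambda_n^{-1/2}r_{n-1}^{1/2}C_z.$$ Moreover $b$ can be taken to be any integer with $b>1+1/\alpha$, and $\beta$ can be taken so that $\beta<(\alpha(b-1)-1)/b$.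
   Context: All quantities are real numbers; $\log$ is the natural logarithm. No probabilistic content is involved. *)

theory Defs
  imports Complex_Main
begin

definition lam :: "nat \<Rightarrow> nat \<Rightarrow> nat \<Rightarrow> real" where
  "lam a b n = real a ^ (b ^ n)"

definition rr :: "nat \<Rightarrow> nat \<Rightarrow> real \<Rightarrow> real \<Rightarrow> real \<Rightarrow> nat \<Rightarrow> real" where
  "rr a b \<beta> Cs Cz n = Cs * (Cz\<^sup>2 + 1) * lam a b 0 powr \<beta> * lam a b n powr (- \<beta>)"

definition ell :: "nat \<Rightarrow> nat \<Rightarrow> nat \<Rightarrow> real" where
  "ell a b n = inverse (lam a b n)"

definition mu :: "nat \<Rightarrow> nat \<Rightarrow> nat \<Rightarrow> real" where
  "mu a b n = sqrt (lam a b (n - 1) * lam a b n)"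

definition SS :: "nat \<Rightarrow> nat \<Rightarrow> real \<Rightarrow> real \<Rightarrow> real \<Rightarrow> nat \<Rightarrow> real \<Rightarrow> real" where
  "SS a b \<beta> Cs Cz N \<theta> =
     (\<Sum>k = 1..N. 4 ^ (N - k) * ell a b k powr (- \<theta>) * sqrt (rr a b \<beta> Cs Cz (k - 1)))"

definition E_miss :: "nat \<Rightarrow> nat \<Rightarrow> real \<Rightarrow> real \<Rightarrow> real \<Rightarrow> nat \<Rightarrow> real" where
  "E_miss a b \<beta> Cs Cz n =
     (ln (mu a b n) * (lam a b (n - 1) / mu a b n + mu a b n / lam a b n)\<^sup>2
       + lam a b (n - 1) / lam a b n) * rr a b \<beta> Cs Cz (n - 1)"

definition E_com :: "real \<Rightarrow> real \<Rightarrow> nat \<Rightarrow> nat \<Rightarrow> real \<Rightarrow> real \<Rightarrow> real \<Rightarrow> nat \<Rightarrow> real" where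
  "E_com \<alpha> \<kappa> a b \<beta> Cs Cz n =
     ln (lam a b n) * lam a b (n - 1) * ell a b n powr \<alpha>
        * SS a b \<beta> Cs Cz (n - 1) \<alpha> * SS a b \<beta> Cs Cz (n - 1) 0
   + ln (lam a b n) * sqrt (lam a b (n - 1))
        * (ell a b n powr \<alpha> * SS a b \<beta> Cs Cz (n - 1) \<alpha>
           + lam a b (n - 1) powr (- \<kappa>) * SS a b \<beta> Cs Cz (n - 1) 0) * Cz
   + ln (lam a b n) * (ell a b n powr \<alpha> + lam a b (n - 1) powr (- \<kappa>)) * Cz\<^sup>2"

definition E_time :: "nat \<Rightarrow> nat \<Rightarrow> real \<Rightarrow> real \<Rightarrow> real \<Rightarrow> nat \<Rightarrow> real" where
  "E_time a b \<beta> Cs Cz n =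
     ln (lam a b n) * lam a b n powr (- 3 / 2) * sqrt (rr a b \<beta> Cs Cz (n - 1))
       * inverse (ell a b n)"

definition E_dis :: "real \<Rightarrow> real \<Rightarrow> nat \<Rightarrow> nat \<Rightarrow> real \<Rightarrow> real \<Rightarrow> real \<Rightarrow> nat \<Rightarrow> real" where
  "E_dis \<gamma> \<nu> a b \<beta> Cs Cz n =
     ln (lam a b n) * \<bar>\<nu>\<bar> * lam a b n powr (\<gamma> - 3 / 2) * rr a b \<beta> Cs Cz (n - 1) powr (1 / 4)"

definition E_trans :: "nat \<Rightarrow> nat \<Rightarrow> real \<Rightarrow> real \<Rightarrow> real \<Rightarrow> nat \<Rightarrow> real" where
  "E_trans a b \<beta> Cs Cz n =
     ln (lam a b n) * sqrt (lam a b (n - 1)) * lam a b n powr (- 1 / 2)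
       * sqrt (rr a b \<beta> Cs Cz (n - 1)) * SS a b \<beta> Cs Cz (n - 1) 0"

definition E_sto :: "nat \<Rightarrow> nat \<Rightarrow> real \<Rightarrow> real \<Rightarrow> real \<Rightarrow> nat \<Rightarrow> real" where
  "E_sto a b \<beta> Cs Cz n =
     ln (lam a b n) * lam a b n powr (- 1 / 2) * sqrt (rr a b \<beta> Cs Cz (n - 1)) * Cz"

definition good_params ::
  "real \<Rightarrow> real \<Rightarrow> real \<Rightarrow> real \<Rightarrow> real \<Rightarrow> nat \<Rightarrow> nat \<Rightarrow> real \<Rightarrow> real \<Rightarrow> real \<Rightarrow> bool" where
  "good_params \<alpha> \<kappa> \<gamma> \<nu> C a b \<beta> Cs Cz \<longleftrightarrow>
     (\<forall>n\<ge>1.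
        mu a b n \<le> lam a b n
      \<and> ell a b n \<le> 1
      \<and> lam a b n \<in> \<nat>
      \<and> 12 * lam a b n \<le> 4 * mu a b (n + 1)
      \<and> 10 \<le> mu a b n
      \<and> 48 * lam a b n \<le> lam a b (n + 1)
      \<and> C * (E_miss a b \<beta> Cs Cz n + E_com \<alpha> \<kappa> a b \<beta> Cs Cz n + E_time a b \<beta> Cs Cz n
             + E_dis \<gamma> \<nu> a b \<beta> Cs Cz n + E_trans a b \<beta> Cs Cz n + E_sto a b \<beta> Cs Cz n)
          \<le> rr a b \<beta> Cs Cz n)"

end

theory Submission
  imports Defs
begin

lemma ev_small:
  fixes M \<delta> :: real assumes "\<delta> > 0" "M \<ge> 0"
  shows "\<exists>T0\<ge>1. \<forall>T\<ge>T0. M * ln T * T powr (-\<delta>) \<le> 1"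
proof -
  define T0 where "T0 = max 1 ((2*M/\<delta> + 1) powr (2/\<delta>))"
  show ?thesis
  proof (intro exI[of _ T0] conjI allI impI)
    show "1 \<le> T0" by (simp add: T0_def)
    fix T assume T: "T0 \<le> T"
    have T1: "1 \<le> T" using T by (simp add: T0_def)
    have Tx: "(2*M/\<delta>+1) powr (2/\<delta>) \<le> T" using T by (simp add: T0_def)
    have "T powr (\<delta>/2) \<ge> ((2*M/\<delta>+1) powr (2/\<delta>)) powr (\<delta>/2)"
      by (rule powr_mono2[OF _ _ Tx]) (use assms in auto)
    also have "((2*M/\<delta>+1) powr (2/\<delta>)) powr (\<delta>/2) = (2*M/\<delta>+1) powr ((2/\<delta>)*(\<delta>/2))"
      by (rule powr_powr)
    also have "(2/\<delta>)*(\<delta>/2) = 1" using assms by simp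
    also have "(2*M/\<delta>+1) powr 1 = 2*M/\<delta>+1" using assms by (intro powr_one) simp
    finally have h1: "2*M/\<delta> + 1 \<le> T powr (\<delta>/2)" .
    have "ln T \<le> T powr (\<delta>/2) / (\<delta>/2)" using T1 assms by (intro ln_powr_bound) auto
    hence "M * ln T * T powr (-\<delta>) \<le> M * (T powr (\<delta>/2) / (\<delta>/2)) * T powr (-\<delta>)"
      using assms by (intro mult_right_mono mult_left_mono) auto
    also have "\<dots> = (2*M/\<delta>) * (T powr (\<delta>/2) * T powr (-\<delta>))" by (simp add: field_simps)
    also have "\<dots> = (2*M/\<delta>) * inverse (T powr (\<delta>/2))"
    proof -
      have "T powr (\<delta>/2) * T powr (-\<delta>) = T powr (-(\<delta>/2))" by (simp add: powr_add[symmetric])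
      also have "\<dots> = inverse (T powr (\<delta>/2))" by (simp add: powr_minus)
      finally show ?thesis by simp
    qed
    also have "\<dots> \<le> 1"
    proof -
      have p: "T powr (\<delta>/2) > 0" using T1 by simp
      have "2*M/\<delta> \<le> T powr (\<delta>/2)" using h1 by linarith
      hence "(2*M/\<delta>) / T powr (\<delta>/2) \<le> 1" by (simp only: divide_le_eq_1_pos[OF p])
      thus ?thesis by (simp only: divide_inverse)
    qed
    finally show "M * ln T * T powr (-\<delta>) \<le> 1" .
  qed
qed

lemma lam_ge1: "a \<ge> 1 \<Longrightarrow> lam a b n \<ge> 1"
  by (simp add: lam_def)

lemma lam_Suc: "lam a b (Suc m) = lam a b m ^ b"
  by (simp add: lam_def power_mult[symmetric] mult.commute)

lemma lam_0: "lam a b 0 = real a"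
  by (simp add: lam_def)

lemma lam_mono: assumes "a \<ge> 1" "b \<ge> 1" "k \<le> m" shows "lam a b k \<le> lam a b m"
proof -
  have "b ^ k \<le> b ^ m" using assms by (intro power_increasing) auto
  thus ?thesis unfolding lam_def using assms by (intro power_increasing) auto
qed

lemma lam_ge_pow: assumes "a \<ge> 1" "b \<ge> 2" shows "real a ^ Suc m \<le> lam a b m"
proof -
  have "Suc m \<le> 2 ^ m" using less_exp[of m] by linarith
  also have "(2::nat) ^ m \<le> b ^ m" using assms by (intro power_mono) auto
  finally show ?thesis unfolding lam_def using assms by (intro power_increasing) auto
qed

lemma ell_powr: "a \<ge> 1 \<Longrightarrow> ell a b k powr s = lam a b k powr (-s)"
  using lam_ge1[of a b k]
  by (simp add: ell_def powr_def ln_inverse)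

lemma rr_eq: "rr a b \<beta> Cs Cz k = Cs*(Cz\<^sup>2+1) * real a powr \<beta> * lam a b k powr (-\<beta>)"
  by (simp add: rr_def lam_0)

lemma piece:
  fixes Q c L T e R0 M0 bb \<beta> \<delta> :: real
  assumes "Q \<le> c * L * T powr e * R0" "c \<le> M0" "e + bb*\<beta> \<le> -\<delta>" "T \<ge> 1" "L \<ge> 0" "R0 \<ge> 0" "c \<ge> 0"
  shows "Q \<le> M0 * L * T powr (-\<delta>) * (R0 * T powr (-(bb*\<beta>)))"
proof -
  have "T powr e = T powr (e + bb*\<beta>) * T powr (-(bb*\<beta>))" by (simp add: powr_add[symmetric])
  hence "c * L * T powr e * R0 = c * L * T powr (e + bb*\<beta>) * (R0 * T powr (-(bb*\<beta>)))" by simp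
  also have "\<dots> \<le> M0 * L * T powr (-\<delta>) * (R0 * T powr (-(bb*\<beta>)))"
    using assms by (intro mult_mono powr_mono mult_nonneg_nonneg) auto
  finally show ?thesis using assms(1) by linarith
qed


lemma SS_bound:
  assumes a1: "a \<ge> 1" and b1: "b \<ge> 1" and th: "\<theta> \<ge> 0" and rb: "\<And>k. sqrt (rr a b \<beta> Cs Cz k) \<le> G"
    and r0: "\<And>k. rr a b \<beta> Cs Cz k \<ge> 0" and G0: "G \<ge> 0"
  shows "SS a b \<beta> Cs Cz m \<theta> \<le> 8 ^ Suc m * lam a b m powr \<theta> * G"
proof -
  have "SS a b \<beta> Cs Cz m \<theta> \<le> of_nat (card {1..m}) * (4 ^ m * lam a b m powr \<theta> * G)"
    unfolding SS_def
  proof (rule sum_bounded_above)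
    fix k assume k: "k \<in> {1..m}"
    have "(4::real) ^ (m - k) \<le> 4 ^ m" by (intro power_increasing) auto
    moreover have "ell a b k powr (-\<theta>) \<le> lam a b m powr \<theta>"
      using ell_powr[OF a1, of b k "-\<theta>"] lam_mono[OF a1 b1, of k m] k lam_ge1[OF a1, of b k] th
      by (simp add: powr_mono2)
    moreover have "sqrt (rr a b \<beta> Cs Cz (k - 1)) \<le> G" by (rule rb)
    ultimately show "4 ^ (m - k) * ell a b k powr - \<theta> * sqrt (rr a b \<beta> Cs Cz (k - 1))
        \<le> 4 ^ m * lam a b m powr \<theta> * G"
      using r0[of "k-1"] by (intro mult_mono) auto
  qed
  also have "\<dots> = real m * 4 ^ m * (lam a b m powr \<theta> * G)" by simp
  also have "\<dots> \<le> 8 ^ Suc m * (lam a b m powr \<theta> * G)"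
  proof (rule mult_right_mono)
    have "real m \<le> real (2 ^ m)" using less_imp_le[OF less_exp[of m]] by (simp only: of_nat_le_iff)
    hence "real m \<le> 2 ^ m" by simp
    hence "real m * 4 ^ m \<le> 2 ^ m * 4 ^ m" by (intro mult_right_mono) auto
    also have "(2::real) ^ m * 4 ^ m = 8 ^ m" by (simp add: power_mult_distrib[symmetric])
    also have "\<dots> \<le> 8 ^ Suc m" by simp
    finally show "real m * 4 ^ m \<le> 8 ^ Suc m" .
    show "0 \<le> lam a b m powr \<theta> * G" using G0 by simp
  qed
  finally show ?thesis by (simp add: mult_ac)
qed


lemma key:
  fixes \<alpha> \<kappa> \<gamma> \<nu> C \<beta> \<epsilon> \<delta> Cs Cz :: real and a b :: nat
  assumes \<alpha>0: "\<alpha> > 0" and b2: "b \<ge> 2" and C1: "C > 1" and \<beta>0: "\<beta> > 0" and \<epsilon>0: "\<epsilon> > 0" and \<delta>0: "\<delta> > 0"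
  and e1: "1 + real b * (-\<alpha>) + \<epsilon> + \<alpha> + \<epsilon> + real b*\<beta> \<le> -\<delta>"
  and e2: "1/2 + (-\<kappa>) + \<epsilon> + real b*\<beta> \<le> -\<delta>"
  and e3: "real b * (- 3 / 2) + real b + real b*\<beta> \<le> -\<delta>"
  and e4: "real b*(\<gamma> - 3 / 2) + real b*\<beta> \<le> -\<delta>"
  and e5: "1/2 + real b * (- 1 / 2) + \<epsilon> + real b*\<beta> \<le> -\<delta>"
  and e6: "1 - real b + - \<beta> + real b*\<beta> \<le> -\<delta>"
  and e7: "real b * (-\<alpha>) + real b*\<beta> \<le> -\<delta>"
  and e8: "-\<kappa> + real b*\<beta> \<le> -\<delta>"
  and e9: "1/2 + real b * (-\<alpha>) + \<epsilon> + \<alpha> + real b*\<beta> \<le> -\<delta>"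
  and e10: "real b * (- 1 / 2) + real b*\<beta> \<le> -\<delta>"
  and a48: "a \<ge> 48" and a8: "real a powr \<epsilon> \<ge> 8"
  and aT: "\<forall>T \<ge> real a. 12*C*((2*real b+3)*(\<bar>\<nu>\<bar>+1)) * ln T * T powr (-\<delta>) \<le> 1"
  and Cs: "Cs \<ge> 1" and Cz: "Cz \<ge> 0"
  shows "good_params \<alpha> \<kappa> \<gamma> \<nu> C a b \<beta> Cs Cz"
  unfolding good_params_def
proof (intro allI impI)
  fix n :: nat assume "n \<ge> 1"
  then obtain m where nm: "n = Suc m" by (cases n) auto
  have a1: "a \<ge> 1" using a48 by simp
  have b1: "b \<ge> 1" using b2 by simp
  define T where "T = lam a b m"
  have Ta: "real a \<le> T" unfolding T_def using lam_mono[OF a1 b1, of 0 m] by (simp add: lam_0)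
  have T1: "T \<ge> 1" and T0: "T > 0" and T48: "T \<ge> 48" using Ta a48 by auto
  have lamn: "lam a b (Suc m) = T ^ b" by (simp add: T_def lam_Suc)
  have lamn': "lam a b (Suc m) = T powr real b" using lamn T0 by (simp add: powr_realpow)
  have lamnp: "\<And>s. lam a b (Suc m) powr s = T powr (real b * s)" using lamn' by (simp add: powr_powr)
  have lnl: "ln (lam a b (Suc m)) = real b * ln T" using lamn by (simp add: ln_realpow)
  have T2b: "\<And>X::real. X \<ge> 1 \<Longrightarrow> X^2 \<le> X^b" using b2 by (intro power_increasing) auto
  have Tb1: "T ^ b \<ge> 1" using T1 by simp
  have "T * 1 \<le> T * T" by (rule mult_left_mono) (use T1 in auto)
  hence "T \<le> T^2" by (simp add: power2_eq_square)
  hence TTb: "T \<le> T ^ b" using T2b[OF T1] by linarith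
  have mun: "mu a b (Suc m) = sqrt (T * T ^ b)" by (simp add: mu_def T_def lamn)
  have R: "mu a b (Suc m) \<le> lam a b (Suc m) \<and> ell a b (Suc m) \<le> 1 \<and> lam a b (Suc m) \<in> \<nat>
      \<and> 12 * lam a b (Suc m) \<le> 4 * mu a b (Suc m + 1) \<and> 10 \<le> mu a b (Suc m)
      \<and> 48 * lam a b (Suc m) \<le> lam a b (Suc m + 1)"
  proof (intro conjI)
    show "mu a b (Suc m) \<le> lam a b (Suc m)" unfolding mun lamn
    proof (rule real_le_lsqrt)
      show "0 \<le> T ^ b" using Tb1 by linarith
      have "T * T ^ b \<le> T ^ b * T ^ b" by (rule mult_right_mono) (use TTb Tb1 in auto)
      thus "T * T ^ b \<le> (T ^ b)\<^sup>2" by (simp add: power2_eq_square)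
    qed
    show "ell a b (Suc m) \<le> 1" unfolding ell_def lamn using Tb1 by (simp add: inverse_le_1_iff)
    show "lam a b (Suc m) \<in> \<nat>" unfolding lam_def by (metis of_nat_in_Nats of_nat_power)
    define X where "X = lam a b (Suc m)"
    have X48: "X \<ge> 48" unfolding X_def lamn using TTb T48 by linarith
    have "48 * X \<le> X * X" by (rule mult_right_mono) (use X48 in auto)
    moreover have "X * X \<le> X ^ b" using T2b[of X] X48 by (simp add: power2_eq_square)
    ultimately have XX: "48 * X \<le> X ^ b" by linarith
    show "48 * lam a b (Suc m) \<le> lam a b (Suc m + 1)" using XX by (simp add: X_def lam_Suc)
    have "(3 * X)^2 \<le> X * X ^ b"
    proof -
      have "(3*X)^2 = X * (9 * X)" by (simp add: power2_eq_square)
      also have "\<dots> \<le> X * X^b" using XX X48 by (intro mult_left_mono) auto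
      finally show ?thesis .
    qed
    hence "3 * X \<le> mu a b (Suc m + 1)" unfolding mu_def using X_def lam_Suc
      by (intro real_le_rsqrt) simp
    thus "12 * lam a b (Suc m) \<le> 4 * mu a b (Suc m + 1)" unfolding X_def by simp
    have "(10::real) * 10 \<le> T * T" by (rule mult_mono) (use T48 in auto)
    also have "T * T \<le> T * T ^ b" by (rule mult_left_mono) (use TTb T1 in auto)
    finally have "(10::real)^2 \<le> T * T ^ b" by (simp add: power2_eq_square)
    thus "10 \<le> mu a b (Suc m)" unfolding mun by (intro real_le_rsqrt)
  qed
  have E: "C * (E_miss a b \<beta> Cs Cz (Suc m) + E_com \<alpha> \<kappa> a b \<beta> Cs Cz (Suc m) + E_time a b \<beta> Cs Cz (Suc m)
             + E_dis \<gamma> \<nu> a b \<beta> Cs Cz (Suc m) + E_trans a b \<beta> Cs Cz (Suc m) + E_sto a b \<beta> Cs Cz (Suc m))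
          \<le> rr a b \<beta> Cs Cz (Suc m)"
  proof -
    define K where "K = Cs * (Cz\<^sup>2 + 1)"
    define A where "A = real a powr \<beta>"
    define R0 where "R0 = K * A"
    define G where "G = sqrt R0"
    define L where "L = ln T"
    define U where "U = R0 * T powr (-(real b * \<beta>))"
    define M0 where "M0 = (2*real b+3)*(\<bar>\<nu>\<bar>+1)"
    define W where "W = M0 * L * T powr (-\<delta>) * U"
    have "1 * 1 \<le> Cs * (Cz\<^sup>2 + 1)" by (rule mult_mono) (use Cs in auto)
    hence K1: "K \<ge> 1" unfolding K_def by simp
    have A1: "A \<ge> 1" unfolding A_def using a1 \<beta>0 by (intro ge_one_powr_ge_zero) auto
    have "1 * 1 \<le> K * A" by (rule mult_mono) (use K1 A1 in auto)
    hence R1: "R0 \<ge> 1" unfolding R0_def by simp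
    have G0: "G \<ge> 0" unfolding G_def using R1 by simp
    have GG: "G * G = R0" unfolding G_def using R1 by simp
    have G1: "G \<ge> 1" unfolding G_def using R1 by simp
    have "G * 1 \<le> G * G" by (rule mult_left_mono) (use G1 G0 in auto)
    hence GR: "G \<le> R0" using GG by simp
    have "1 * (Cz\<^sup>2 + 1) \<le> Cs * (Cz\<^sup>2 + 1)" by (rule mult_right_mono) (use Cs in auto)
    hence "Cz\<^sup>2 + 1 \<le> K" unfolding K_def by simp
    moreover have "K * 1 \<le> K * A" by (rule mult_left_mono) (use A1 K1 in auto)
    ultimately have CzK: "Cz\<^sup>2 \<le> R0" unfolding R0_def by simp
    have CzG: "Cz \<le> G" unfolding G_def using CzK by (rule real_le_rsqrt)
    have "G * Cz \<le> G * G" by (rule mult_left_mono[OF CzG G0])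
    hence CzGR: "G * Cz \<le> R0" using GG by simp
    have L1: "L \<ge> 1" unfolding L_def using T48 exp_le by (subst ln_ge_iff) (use T0 in auto)
    have M0b: "real b \<le> M0" and M0c: "2*real b+3 \<le> M0" and M0n: "real b * \<bar>\<nu>\<bar> \<le> M0"
      unfolding M0_def by (auto simp: algebra_simps)
    have rreq: "\<And>k. rr a b \<beta> Cs Cz k = R0 * lam a b k powr (-\<beta>)"
      unfolding rr_eq R0_def K_def A_def by simp
    have rr0: "\<And>k. rr a b \<beta> Cs Cz k \<ge> 0" unfolding rreq using R1 by simp
    have rrR: "\<And>k. rr a b \<beta> Cs Cz k \<le> R0"
    proof -
      fix k
      have "lam a b k powr (-\<beta>) \<le> lam a b k powr 0" using lam_ge1[OF a1, of b k] \<beta>0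
        by (intro powr_mono) auto
      hence "lam a b k powr (-\<beta>) \<le> 1" using lam_ge1[OF a1, of b k] by simp
      thus "rr a b \<beta> Cs Cz k \<le> R0" unfolding rreq using R1 by (simp add: mult_left_le)
    qed
    have sqR: "\<And>k. sqrt (rr a b \<beta> Cs Cz k) \<le> G" unfolding G_def using rrR by simp
    have rrm: "rr a b \<beta> Cs Cz m = R0 * T powr (-\<beta>)" unfolding rreq T_def ..
    have rrn: "rr a b \<beta> Cs Cz (Suc m) = U" unfolding rreq U_def lamnp by simp
    have P8: "8 ^ Suc m \<le> T powr \<epsilon>"
    proof -
      have "(8::real) ^ Suc m \<le> (real a powr \<epsilon>) ^ Suc m" using a8 by (intro power_mono) auto
      also have "\<dots> = real a powr (real (Suc m) * \<epsilon>)" using a1 by (subst powr_power) auto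
      also have "\<dots> = (real a powr real (Suc m)) powr \<epsilon>" by (simp add: powr_powr)
      also have "\<dots> = (real a ^ Suc m) powr \<epsilon>" using a1 by (subst powr_realpow) auto
      also have "\<dots> \<le> T powr \<epsilon>" unfolding T_def using lam_ge_pow[OF a1 b2, of m] \<epsilon>0 a1
        by (intro powr_mono2) auto
      finally show ?thesis .
    qed
    define SA where "SA = SS a b \<beta> Cs Cz m \<alpha>"
    define S0 where "S0 = SS a b \<beta> Cs Cz m 0"
    have SA0: "SA \<ge> 0" unfolding SA_def SS_def
      using rr0 by (intro sum_nonneg mult_nonneg_nonneg) auto
    have S00: "S0 \<ge> 0" unfolding S0_def SS_def
      using rr0 by (intro sum_nonneg mult_nonneg_nonneg) auto
    have SAb: "SA \<le> T powr \<epsilon> * T powr \<alpha> * G"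
    proof -
      have "SA \<le> 8 ^ Suc m * T powr \<alpha> * G" unfolding SA_def T_def
        using \<open>\<alpha> > 0\<close> by (intro SS_bound[OF a1 b1 _ sqR rr0 G0]) auto
      also have "\<dots> \<le> T powr \<epsilon> * T powr \<alpha> * G" using P8 G0
        by (intro mult_right_mono) auto
      finally show ?thesis .
    qed
    have S0b: "S0 \<le> T powr \<epsilon> * G"
    proof -
      have "S0 \<le> 8 ^ Suc m * T powr 0 * G" unfolding S0_def T_def
        by (intro SS_bound[OF a1 b1 _ sqR rr0 G0]) auto
      also have "\<dots> \<le> T powr \<epsilon> * G" using P8 G0 T0
        by (simp add: mult_right_mono)
      finally show ?thesis .
    qed
    have sqT: "sqrt T = T powr (1/2)" using T0 by (simp add: powr_half_sqrt)
    have ellp: "ell a b (Suc m) powr \<alpha> = T powr (real b * (-\<alpha>))"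
      using ell_powr[OF a1, of b "Suc m" \<alpha>] lamnp by simp
    have invell: "inverse (ell a b (Suc m)) = T powr real b" unfolding ell_def lamn' by simp
    have L0: "L \<ge> 0" using L1 by simp
    have Tp0: "\<And>x. T powr x \<ge> 0" by simp
    have pw1: "T powr 1 = T" using T0 by (intro powr_one) simp
    have mu_eq: "mu a b (Suc m) = T powr ((1 + real b)/2)"
    proof -
      have "T * T ^ b = T powr (1 + real b)" using T0 by (simp add: powr_add powr_realpow)
      thus ?thesis unfolding mun using T0 by (simp add: powr_half_sqrt_powr)
    qed
    have d1: "T / T powr ((1 + real b)/2) = T powr ((1 - real b)/2)"
    proof -
      have "T powr ((1 - real b)/2) = T powr (1 - (1 + real b)/2)" by (simp add: field_simps)
      also have "\<dots> = T / T powr ((1 + real b)/2)" using T0 by (simp add: powr_diff)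
      finally show ?thesis by simp
    qed
    have d2: "T powr ((1 + real b)/2) / T powr real b = T powr ((1 - real b)/2)"
    proof -
      have "T powr ((1 - real b)/2) = T powr ((1 + real b)/2 - real b)" by (simp add: field_simps)
      also have "\<dots> = T powr ((1 + real b)/2) / T powr real b" by (rule powr_diff)
      finally show ?thesis by (rule sym)
    qed
    have d3: "T / T powr real b = T powr (1 - real b)" using T0 by (simp add: powr_diff)
    have sq: "(T powr ((1 - real b)/2) + T powr ((1 - real b)/2))\<^sup>2 = 4 * T powr (1 - real b)"
    proof -
      have "(T powr ((1 - real b)/2))^2 = T powr (real 2 * ((1 - real b)/2))"
        using T0 by (intro powr_power) auto
      also have "real 2 * ((1 - real b)/2) = 1 - real b" by simp
      finally have "(T powr ((1 - real b)/2))^2 = T powr (1 - real b)" .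
      thus ?thesis by (simp add: power2_eq_square algebra_simps)
    qed
    have lnmu: "ln (T powr ((1 + real b)/2)) = (1 + real b)/2 * L" unfolding L_def by simp
    have Em: "E_miss a b \<beta> Cs Cz (Suc m) = ((1 + real b)/2 * L * (4 * T powr (1 - real b)) + T powr (1 - real b)) * (R0 * T powr (-\<beta>))"
      unfolding E_miss_def diff_Suc_1 T_def[symmetric] mu_eq lamn' d1 d2 d3 sq rrm lnmu ..
    have EmB: "E_miss a b \<beta> Cs Cz (Suc m) \<le> (2*real b+3) * L * T powr (1 - real b + -\<beta>) * R0"
    proof -
      have "E_miss a b \<beta> Cs Cz (Suc m) = (2*(1 + real b)*L + 1) * (T powr (1 - real b) * T powr (-\<beta>)) * R0"
        unfolding Em by (simp add: algebra_simps)
      also have "\<dots> \<le> ((2*real b+3) * L) * (T powr (1 - real b) * T powr (-\<beta>)) * R0"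
        using L1 R1 by (intro mult_right_mono) (auto simp: algebra_simps)
      also have "T powr (1 - real b) * T powr (-\<beta>) = T powr (1 - real b + -\<beta>)" by (rule powr_add[symmetric])
      finally show ?thesis by simp
    qed
    have W1: "E_miss a b \<beta> Cs Cz (Suc m) \<le> W" unfolding W_def U_def
      by (rule piece[OF EmB M0c]) (use e6 T1 L0 R1 in auto)
    define Ea where "Ea = T powr (real b * (-\<alpha>))"
    define Th where "Th = T powr (1/2)"
    define Tk where "Tk = T powr (-\<kappa>)"
    define Te where "Te = T powr \<epsilon>"
    define Tal where "Tal = T powr \<alpha>"
    have Ec: "E_com \<alpha> \<kappa> a b \<beta> Cs Cz (Suc m) =
        real b*L*T*Ea*SA*S0 + real b*L*Th*Ea*(SA*Cz) + real b*L*Th*Tk*(S0*Cz)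
        + real b*L*Ea*Cz\<^sup>2 + real b*L*Tk*Cz\<^sup>2"
      unfolding E_com_def diff_Suc_1 lnl L_def[symmetric] ellp T_def[symmetric] sqT
        SA_def[symmetric] S0_def[symmetric] Ea_def[symmetric] Th_def[symmetric] Tk_def[symmetric]
      by (simp add: algebra_simps)
    have nn: "0 \<le> real b * L" using L0 by simp
    have p1: "real b*L*T*Ea*SA*S0 \<le> real b * L * T powr (1 + real b * (-\<alpha>) + \<epsilon> + \<alpha> + \<epsilon>) * R0"
    proof -
      have "real b*L*T*Ea*SA*S0 = (real b*L*T*Ea)*(SA*S0)" by (simp add: mult_ac)
      also have "\<dots> \<le> (real b*L*T*Ea)*((Te*Tal*G)*(Te*G))"
        using SAb S0b SA0 S00 G0 nn T0 unfolding Te_def Tal_def Ea_def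
        by (intro mult_left_mono mult_mono) auto
      also have "\<dots> = real b*L*(T*Ea*Te*Tal*Te)*(G*G)" by (simp add: mult_ac)
      also have "T*Ea*Te*Tal*Te = T powr (1 + real b * (-\<alpha>) + \<epsilon> + \<alpha> + \<epsilon>)"
        unfolding Ea_def Te_def Tal_def by (simp only: powr_add pw1 mult_ac)
      finally show ?thesis using GG by simp
    qed
    have p2: "real b*L*Th*Ea*(SA*Cz) \<le> real b * L * T powr (1/2 + real b * (-\<alpha>) + \<epsilon> + \<alpha>) * R0"
    proof -
      have "SA*Cz \<le> (Te*Tal*G)*Cz" using SAb Cz unfolding Te_def Tal_def by (intro mult_right_mono) auto
      also have "\<dots> = (Te*Tal)*(G*Cz)" by (simp add: mult_ac)
      also have "\<dots> \<le> (Te*Tal)*R0" using CzGR unfolding Te_def Tal_def by (intro mult_left_mono) auto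
      finally have h: "SA*Cz \<le> (Te*Tal)*R0" .
      have "real b*L*Th*Ea*(SA*Cz) \<le> real b*L*Th*Ea*((Te*Tal)*R0)"
        using h nn unfolding Th_def Ea_def by (intro mult_left_mono) auto
      also have "\<dots> = real b*L*(Th*Ea*Te*Tal)*R0" by (simp add: mult_ac)
      also have "Th*Ea*Te*Tal = T powr (1/2 + real b * (-\<alpha>) + \<epsilon> + \<alpha>)"
        unfolding Th_def Ea_def Te_def Tal_def by (simp only: powr_add pw1 mult_ac)
      finally show ?thesis .
    qed
    have p3: "real b*L*Th*Tk*(S0*Cz) \<le> real b * L * T powr (1/2 + (-\<kappa>) + \<epsilon>) * R0"
    proof -
      have "S0*Cz \<le> (Te*G)*Cz" using S0b Cz unfolding Te_def by (intro mult_right_mono) auto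
      also have "\<dots> = Te*(G*Cz)" by (simp add: mult_ac)
      also have "\<dots> \<le> Te*R0" using CzGR unfolding Te_def by (intro mult_left_mono) auto
      finally have h: "S0*Cz \<le> Te*R0" .
      have "real b*L*Th*Tk*(S0*Cz) \<le> real b*L*Th*Tk*(Te*R0)"
        using h nn unfolding Th_def Tk_def by (intro mult_left_mono) auto
      also have "\<dots> = real b*L*(Th*Tk*Te)*R0" by (simp add: mult_ac)
      also have "Th*Tk*Te = T powr (1/2 + (-\<kappa>) + \<epsilon>)"
        unfolding Th_def Tk_def Te_def by (simp only: powr_add pw1 mult_ac)
      finally show ?thesis .
    qed
    have p4: "real b*L*Ea*Cz\<^sup>2 \<le> real b * L * T powr (real b * (-\<alpha>)) * R0"
      unfolding Ea_def using CzK nn by (intro mult_left_mono) auto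
    have p5: "real b*L*Tk*Cz\<^sup>2 \<le> real b * L * T powr (-\<kappa>) * R0"
      unfolding Tk_def using CzK nn by (intro mult_left_mono) auto
    have W2: "real b*L*T*Ea*SA*S0 \<le> W" unfolding W_def U_def
      by (rule piece[OF p1 M0b]) (use e1 T1 L0 R1 in auto)
    have W3: "real b*L*Th*Ea*(SA*Cz) \<le> W" unfolding W_def U_def
      by (rule piece[OF p2 M0b]) (use e9 T1 L0 R1 in auto)
    have W4: "real b*L*Th*Tk*(S0*Cz) \<le> W" unfolding W_def U_def
      by (rule piece[OF p3 M0b]) (use e2 T1 L0 R1 in auto)
    have W5: "real b*L*Ea*Cz\<^sup>2 \<le> W" unfolding W_def U_def
      by (rule piece[OF p4 M0b]) (use e7 T1 L0 R1 in auto)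
    have W6: "real b*L*Tk*Cz\<^sup>2 \<le> W" unfolding W_def U_def
      by (rule piece[OF p5 M0b]) (use e8 T1 L0 R1 in auto)
    have Et: "E_time a b \<beta> Cs Cz (Suc m) = real b * L * T powr (real b * (- 3 / 2)) * sqrt (rr a b \<beta> Cs Cz m) * T powr real b"
      unfolding E_time_def diff_Suc_1 lnl L_def[symmetric] lamnp invell ..
    have pt: "E_time a b \<beta> Cs Cz (Suc m) \<le> real b * L * T powr (real b * (- 3 / 2) + real b) * R0"
    proof -
      have "E_time a b \<beta> Cs Cz (Suc m) = (real b * L * (T powr (real b * (- 3 / 2)) * T powr real b)) * sqrt (rr a b \<beta> Cs Cz m)"
        unfolding Et by (simp add: mult_ac)
      also have "\<dots> \<le> (real b * L * (T powr (real b * (- 3 / 2)) * T powr real b)) * R0"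
        using sqR[of m] GR nn by (intro mult_left_mono) auto
      also have "T powr (real b * (- 3 / 2)) * T powr real b = T powr (real b * (- 3 / 2) + real b)"
        by (rule powr_add[symmetric])
      finally show ?thesis .
    qed
    have W7: "E_time a b \<beta> Cs Cz (Suc m) \<le> W" unfolding W_def U_def
      by (rule piece[OF pt M0b]) (use e3 T1 L0 R1 in auto)
    have r14: "rr a b \<beta> Cs Cz m powr (1/4) \<le> R0"
    proof -
      have "rr a b \<beta> Cs Cz m powr (1/4) \<le> R0 powr (1/4)" using rr0[of m] rrR[of m] by (intro powr_mono2) auto
      also have "\<dots> \<le> R0 powr 1" using R1 by (intro powr_mono) auto
      finally show ?thesis using R1 by simp
    qed
    have pd: "E_dis \<gamma> \<nu> a b \<beta> Cs Cz (Suc m) \<le> (real b * \<bar>\<nu>\<bar>) * L * T powr (real b * (\<gamma> - 3 / 2)) * R0"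
    proof -
      have "E_dis \<gamma> \<nu> a b \<beta> Cs Cz (Suc m) = ((real b * \<bar>\<nu>\<bar>) * L * T powr (real b * (\<gamma> - 3 / 2))) * rr a b \<beta> Cs Cz m powr (1/4)"
        unfolding E_dis_def diff_Suc_1 lnl L_def[symmetric] lamnp by (simp add: mult_ac)
      also have "\<dots> \<le> ((real b * \<bar>\<nu>\<bar>) * L * T powr (real b * (\<gamma> - 3 / 2))) * R0"
        using r14 L0 by (intro mult_left_mono) auto
      finally show ?thesis .
    qed
    have W8: "E_dis \<gamma> \<nu> a b \<beta> Cs Cz (Suc m) \<le> W" unfolding W_def U_def
      by (rule piece[OF pd M0n]) (use e4 T1 L0 R1 in auto)
    have ptr: "E_trans a b \<beta> Cs Cz (Suc m) \<le> real b * L * T powr (1/2 + real b * (- 1 / 2) + \<epsilon>) * R0"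
    proof -
      have "E_trans a b \<beta> Cs Cz (Suc m) = (real b * L * (Th * T powr (real b * (- 1 / 2)))) * (sqrt (rr a b \<beta> Cs Cz m) * S0)"
        unfolding E_trans_def diff_Suc_1 lnl L_def[symmetric] lamnp T_def[symmetric] sqT Th_def[symmetric] S0_def[symmetric]
        by (simp add: mult_ac)
      also have "\<dots> \<le> (real b * L * (Th * T powr (real b * (- 1 / 2)))) * (G * (Te * G))"
        using sqR[of m] S0b S00 G0 nn unfolding Th_def Te_def by (intro mult_left_mono mult_mono) auto
      also have "\<dots> = real b * L * (Th * T powr (real b * (- 1 / 2)) * Te) * (G * G)" by (simp add: mult_ac)
      also have "Th * T powr (real b * (- 1 / 2)) * Te = T powr (1/2 + real b * (- 1 / 2) + \<epsilon>)"
        unfolding Th_def Te_def by (simp only: powr_add mult_ac)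
      finally show ?thesis using GG by simp
    qed
    have W9: "E_trans a b \<beta> Cs Cz (Suc m) \<le> W" unfolding W_def U_def
      by (rule piece[OF ptr M0b]) (use e5 T1 L0 R1 in auto)
    have ps: "E_sto a b \<beta> Cs Cz (Suc m) \<le> real b * L * T powr (real b * (- 1 / 2)) * R0"
    proof -
      have "E_sto a b \<beta> Cs Cz (Suc m) = (real b * L * T powr (real b * (- 1 / 2))) * (sqrt (rr a b \<beta> Cs Cz m) * Cz)"
        unfolding E_sto_def diff_Suc_1 lnl L_def[symmetric] lamnp by (simp add: mult_ac)
      also have "\<dots> \<le> (real b * L * T powr (real b * (- 1 / 2))) * (G * Cz)"
        using sqR[of m] Cz nn by (intro mult_left_mono mult_right_mono) auto
      also have "\<dots> \<le> (real b * L * T powr (real b * (- 1 / 2))) * R0"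
        using CzGR nn by (intro mult_left_mono) auto
      finally show ?thesis .
    qed
    have W10: "E_sto a b \<beta> Cs Cz (Suc m) \<le> W" unfolding W_def U_def
      by (rule piece[OF ps M0b]) (use e10 T1 L0 R1 in auto)
    have sum: "E_miss a b \<beta> Cs Cz (Suc m) + E_com \<alpha> \<kappa> a b \<beta> Cs Cz (Suc m) + E_time a b \<beta> Cs Cz (Suc m)
             + E_dis \<gamma> \<nu> a b \<beta> Cs Cz (Suc m) + E_trans a b \<beta> Cs Cz (Suc m) + E_sto a b \<beta> Cs Cz (Suc m) \<le> 10 * W"
      unfolding Ec using W1 W2 W3 W4 W5 W6 W7 W8 W9 W10 by linarith
    have W0: "W \<ge> 0" unfolding W_def U_def M0_def using L0 R1 by (intro mult_nonneg_nonneg) auto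
    have "12*C*M0 * ln T * T powr (-\<delta>) \<le> 1" using aT Ta unfolding M0_def by blast
    hence "(12*C*M0 * L * T powr (-\<delta>)) * U \<le> 1 * U" unfolding L_def U_def using R1
      by (intro mult_right_mono) auto
    hence W12: "12 * C * W \<le> U" unfolding W_def by (simp add: mult_ac)
    have "C * (E_miss a b \<beta> Cs Cz (Suc m) + E_com \<alpha> \<kappa> a b \<beta> Cs Cz (Suc m) + E_time a b \<beta> Cs Cz (Suc m)
             + E_dis \<gamma> \<nu> a b \<beta> Cs Cz (Suc m) + E_trans a b \<beta> Cs Cz (Suc m) + E_sto a b \<beta> Cs Cz (Suc m)) \<le> C * (10 * W)"
      using sum C1 by (intro mult_left_mono) auto
    also have "\<dots> \<le> 12 * C * W" using C1 W0 by (simp add: mult_right_mono)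
    also have "\<dots> \<le> U" by (rule W12)
    finally show ?thesis unfolding rrn .
  qed
  show "mu a b n \<le> lam a b n \<and> ell a b n \<le> 1 \<and> lam a b n \<in> \<nat>
      \<and> 12 * lam a b n \<le> 4 * mu a b (n + 1) \<and> 10 \<le> mu a b n
      \<and> 48 * lam a b n \<le> lam a b (n + 1)
      \<and> C * (E_miss a b \<beta> Cs Cz n + E_com \<alpha> \<kappa> a b \<beta> Cs Cz n + E_time a b \<beta> Cs Cz n
             + E_dis \<gamma> \<nu> a b \<beta> Cs Cz n + E_trans a b \<beta> Cs Cz n + E_sto a b \<beta> Cs Cz n)
          \<le> rr a b \<beta> Cs Cz n" unfolding nm using R E by blast
qed


lemma part2:
  fixes \<alpha> \<kappa> \<gamma> \<nu> C :: real and b :: nat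
  assumes \<alpha>0: "\<alpha> > 0" and \<kappa>: "\<kappa> > 1 / 2" and \<gamma>: "\<gamma> < 3 / 2" and C1: "C > 1"
    and bgt: "real b > 1 + 1 / \<alpha>"
  shows "\<exists>(a :: nat) (\<beta> :: real). 0 < \<beta> \<and> \<beta> < 1
                 \<and> \<beta> < (\<alpha> * (real b - 1) - 1) / real b \<and>
                 (\<forall>Cs Cz :: real. Cs \<ge> 1 \<and> Cz \<ge> 0 \<longrightarrow> good_params \<alpha> \<kappa> \<gamma> \<nu> C a b \<beta> Cs Cz)"
proof -
  have ia: "1 / \<alpha> > 0" using \<alpha>0 by simp
  have "real b > 1" using bgt ia by linarith
  hence b2: "b \<ge> 2" by linarith
  have rb2: "real b \<ge> 2" using b2 by linarith
  have "real b - 1 > 1 / \<alpha>" using bgt by linarith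
  hence "\<alpha> * (real b - 1) > \<alpha> * (1 / \<alpha>)" using \<alpha>0 by (intro mult_strict_left_mono) auto
  hence ab: "\<alpha> * (real b - 1) - 1 > 0" using \<alpha>0 by simp
  define D where "D = min (min (\<alpha> * (real b - 1) - 1) (\<kappa> - 1/2)) (min (1/2) (real b * (3/2 - \<gamma>)))"
  have "real b * (3/2 - \<gamma>) > 0" using \<gamma> rb2 by (intro mult_pos_pos) auto
  hence D0: "D > 0" unfolding D_def using ab \<kappa> by auto
  have D1: "D \<le> \<alpha> * (real b - 1) - 1" "D \<le> \<kappa> - 1/2" "D \<le> 1/2" "D \<le> real b * (3/2 - \<gamma>)"
    unfolding D_def
    by (rule order_trans[OF min.cobounded1 min.cobounded1], rule order_trans[OF min.cobounded1 min.cobounded2],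
        rule order_trans[OF min.cobounded2 min.cobounded1], rule order_trans[OF min.cobounded2 min.cobounded2])
  define \<eta> where "\<eta> = D / 4"
  have \<eta>0: "\<eta> > 0" unfolding \<eta>_def using D0 by simp
  define \<beta> where "\<beta> = \<eta> / real b"
  have b\<beta>: "real b * \<beta> = \<eta>" unfolding \<beta>_def using rb2 by simp
  have \<beta>0: "\<beta> > 0" unfolding \<beta>_def using \<eta>0 rb2 by simp
  have "\<eta> / real b \<le> \<eta> / 1" by (rule divide_left_mono) (use \<eta>0 rb2 in auto)
  hence \<beta>\<eta>: "\<beta> \<le> \<eta>" unfolding \<beta>_def by simp
  have h1: "real b * (-\<alpha>) = -(\<alpha> * (real b - 1)) - \<alpha>" by (simp add: algebra_simps)
  have h2: "real b * (\<gamma> - 3 / 2) = - (real b * (3/2 - \<gamma>))" by (simp add: algebra_simps)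
  define M where "M = 12*C*((2*real b+3)*(\<bar>\<nu>\<bar>+1))"
  have M0: "M \<ge> 0" unfolding M_def using C1 by simp
  obtain T0 where T0: "T0 \<ge> 1" "\<forall>T\<ge>T0. M * ln T * T powr (-\<eta>) \<le> 1"
    using ev_small[OF \<eta>0 M0] by blast
  define x where "x = max (max 48 T0) (8 powr (1/\<eta>))"
  define a where "a = nat \<lceil>x\<rceil>"
  have x0: "x \<ge> 48" unfolding x_def by simp
  have ax: "real a \<ge> x" unfolding a_def using x0 by linarith
  have a48: "a \<ge> 48" using ax x0 by linarith
  have aT: "\<forall>T \<ge> real a. 12*C*((2*real b+3)*(\<bar>\<nu>\<bar>+1)) * ln T * T powr (-\<eta>) \<le> 1"
    using T0(2) ax unfolding M_def x_def by auto
  have a8: "real a powr \<eta> \<ge> 8"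
  proof -
    have "(8 powr (1/\<eta>)) powr \<eta> \<le> real a powr \<eta>" using ax \<eta>0 unfolding x_def
      by (intro powr_mono2) auto
    moreover have "(8 powr (1/\<eta>)) powr \<eta> = 8" using \<eta>0 by (simp add: powr_powr)
    ultimately show ?thesis by simp
  qed
  show ?thesis
  proof (intro exI[of _ a] exI[of _ \<beta>] conjI allI impI)
    show "0 < \<beta>" by (rule \<beta>0)
    show "\<beta> < 1" using \<beta>\<eta> D1 unfolding \<eta>_def by linarith
    have "\<eta> < \<alpha> * (real b - 1) - 1" using D1 D0 unfolding \<eta>_def by linarith
    thus "\<beta> < (\<alpha> * (real b - 1) - 1) / real b" unfolding \<beta>_def using rb2
      by (intro divide_strict_right_mono) auto
    fix Cs Cz :: real assume "1 \<le> Cs \<and> 0 \<le> Cz"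
    hence Cs: "1 \<le> Cs" and Cz: "0 \<le> Cz" by auto
    have D4: "4*\<eta> = D" unfolding \<eta>_def by simp
    have e1: "1 + real b * (-\<alpha>) + \<eta> + \<alpha> + \<eta> + real b*\<beta> \<le> -\<eta>" unfolding b\<beta> h1 using D1 D4 \<eta>0 by linarith
    have e2: "1/2 + (-\<kappa>) + \<eta> + real b*\<beta> \<le> -\<eta>" unfolding b\<beta> using D1 D4 \<eta>0 by linarith
    have e3: "real b * (- 3 / 2) + real b + real b*\<beta> \<le> -\<eta>" unfolding b\<beta> using D1 D4 \<eta>0 rb2 by linarith
    have e4: "real b*(\<gamma> - 3 / 2) + real b*\<beta> \<le> -\<eta>" unfolding b\<beta> h2 using D1 D4 \<eta>0 by linarith
    have e5: "1/2 + real b * (- 1 / 2) + \<eta> + real b*\<beta> \<le> -\<eta>" unfolding b\<beta> using D1 D4 \<eta>0 rb2 by linarith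
    have e6: "1 - real b + - \<beta> + real b*\<beta> \<le> -\<eta>" unfolding b\<beta> using D1 D4 \<eta>0 rb2 \<beta>0 by linarith
    have e7: "real b * (-\<alpha>) + real b*\<beta> \<le> -\<eta>" unfolding b\<beta> h1 using D1 D4 \<eta>0 \<alpha>0 by linarith
    have e8: "-\<kappa> + real b*\<beta> \<le> -\<eta>" unfolding b\<beta> using D1 D4 \<eta>0 by linarith
    have e9: "1/2 + real b * (-\<alpha>) + \<eta> + \<alpha> + real b*\<beta> \<le> -\<eta>" unfolding b\<beta> h1 using D1 D4 \<eta>0 by linarith
    have e10: "real b * (- 1 / 2) + real b*\<beta> \<le> -\<eta>" unfolding b\<beta> using D1 D4 \<eta>0 rb2 by linarith
    show "good_params \<alpha> \<kappa> \<gamma> \<nu> C a b \<beta> Cs Cz"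
      by (rule key[OF \<alpha>0 b2 C1 \<beta>0 \<eta>0 \<eta>0 e1 e2 e3 e4 e5 e6 e7 e8 e9 e10 a48 a8 aT Cs Cz])
  qed
qed

theorem mainTheorem2:
  fixes \<alpha> \<kappa> \<gamma> \<nu> :: real
  assumes "\<alpha> > 0" and "\<kappa> > 1 / 2" and "\<gamma> < 3 / 2"
  shows "\<forall>C :: real. C > 1 \<longrightarrow>
           (\<exists>(a :: nat) (b :: nat) (\<beta> :: real). 0 < \<beta> \<and> \<beta> < 1 \<and>
              (\<forall>Cs Cz :: real. Cs \<ge> 1 \<and> Cz \<ge> 0 \<longrightarrow> good_params \<alpha> \<kappa> \<gamma> \<nu> C a b \<beta> Cs Cz))
         \<and> (\<forall>b :: nat. real b > 1 + 1 / \<alpha> \<longrightarrow>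
              (\<exists>(a :: nat) (\<beta> :: real). 0 < \<beta> \<and> \<beta> < 1
                 \<and> \<beta> < (\<alpha> * (real b - 1) - 1) / real b \<and>
                 (\<forall>Cs Cz :: real. Cs \<ge> 1 \<and> Cz \<ge> 0 \<longrightarrow> good_params \<alpha> \<kappa> \<gamma> \<nu> C a b \<beta> Cs Cz)))"
proof (intro allI impI)
  fix C :: real assume C1: "C > 1"
  have Q: "\<forall>b :: nat. real b > 1 + 1 / \<alpha> \<longrightarrow>
              (\<exists>(a :: nat) (\<beta> :: real). 0 < \<beta> \<and> \<beta> < 1
                 \<and> \<beta> < (\<alpha> * (real b - 1) - 1) / real b \<and>
                 (\<forall>Cs Cz :: real. Cs \<ge> 1 \<and> Cz \<ge> 0 \<longrightarrow> good_params \<alpha> \<kappa> \<gamma> \<nu> C a b \<beta> Cs Cz))"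
    using part2[OF assms C1] by blast
  define b where "b = nat \<lceil>1 + 1 / \<alpha>\<rceil> + 1"
  have "real b > 1 + 1 / \<alpha>" unfolding b_def using assms(1) by linarith
  from part2[OF assms C1 this, of \<nu>] obtain a \<beta> where
    "0 < \<beta> \<and> \<beta> < 1 \<and> (\<forall>Cs Cz :: real. Cs \<ge> 1 \<and> Cz \<ge> 0 \<longrightarrow> good_params \<alpha> \<kappa> \<gamma> \<nu> C a b \<beta> Cs Cz)"
    by blast
  hence "\<exists>(a :: nat) (b :: nat) (\<beta> :: real). 0 < \<beta> \<and> \<beta> < 1 \<and>
              (\<forall>Cs Cz :: real. Cs \<ge> 1 \<and> Cz \<ge> 0 \<longrightarrow> good_params \<alpha> \<kappa> \<gamma> \<nu> C a b \<beta> Cs Cz)"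
    by blast
  thus "(\<exists>(a :: nat) (b :: nat) (\<beta> :: real). 0 < \<beta> \<and> \<beta> < 1 \<and>
              (\<forall>Cs Cz :: real. Cs \<ge> 1 \<and> Cz \<ge> 0 \<longrightarrow> good_params \<alpha> \<kappa> \<gamma> \<nu> C a b \<beta> Cs Cz))
         \<and> (\<forall>b :: nat. real b > 1 + 1 / \<alpha> \<longrightarrow>
              (\<exists>(a :: nat) (\<beta> :: real). 0 < \<beta> \<and> \<beta> < 1
                 \<and> \<beta> < (\<alpha> * (real b - 1) - 1) / real b \<and>
                 (\<forall>Cs Cz :: real. Cs \<ge> 1 \<and> Cz \<ge> 0 \<longrightarrow> good_params \<alpha> \<kappa> \<gamma> \<nu> C a b \<beta> Cs Cz)))"
    using Q by blast
qed

end
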